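(* Let $G$ be a group with finite generating sets $S$ and $T$ (neither containing the identity), and let $d_S$ and $d_T$ be the cardinal metrics on $G$ induced by $S$ and $T$, respectively. Then every injective map $f\colon G\to G$ is bi-Lipschitz as a map $(G,d_T)\to(G,d_S)$, i.e. there is a constant $K\ge 1$ with $\frac1K d_T(g,h)\le d_S(f(g),f(h))\le K d_T(g,h)$ for all $g,h\in G$. In particular, every permutation of $G$ is a bi-Lipschitz equivalence, and so $(G,d_S)$ and $(G,d_T)$ are bi-Lipschitz equivalent.
   Context: For a generating set $U$ of $G$ (not containing the identity), the cardinal norm is $\|g\|_U = \min\{|A| : A\subseteq U,\ g\in\langle A\rangle\}$, where $\langle A\rangle$ is the subgroup generated by $A$, and the cardinal metric induced by $U$ is $d_U(g,h)=\|g^{-1}h\|_U$. *)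

theory Defs
  imports Complex_Main "HOL-Algebra.Generated_Groups"
begin

definition cardinal_norm :: "('a, 'b) monoid_scheme \<Rightarrow> 'a set \<Rightarrow> 'a \<Rightarrow> nat" where
  "cardinal_norm G U g = (LEAST n. \<exists>A. A \<subseteq> U \<and> finite A \<and> card A = n \<and> g \<in> generate G A)"

definition cardinal_metric :: "('a, 'b) monoid_scheme \<Rightarrow> 'a set \<Rightarrow> 'a \<Rightarrow> 'a \<Rightarrow> nat" where
  "cardinal_metric G U g h = cardinal_norm G U (inv\<^bsub>G\<^esub> g \<otimes>\<^bsub>G\<^esub> h)"

definition finite_gen_set :: "('a, 'b) monoid_scheme \<Rightarrow> 'a set \<Rightarrow> bool" where
  "finite_gen_set G U \<longleftrightarrow> finite U \<and> U \<subseteq> carrier G \<and> \<one>\<^bsub>G\<^esub> \<notin> U \<and> generate G U = carrier G"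

end

theory Submission
  imports Defs
begin

lemma norm_le:
  assumes "finite U" "g \<in> generate G U"
  shows "cardinal_norm G U g \<le> card U"
  unfolding cardinal_norm_def
  by (rule Least_le) (use assms in blast)

lemma norm_zero_iff:
  assumes "group G" "finite U" "g \<in> generate G U"
  shows "cardinal_norm G U g = 0 \<longleftrightarrow> g = \<one>\<^bsub>G\<^esub>"
proof
  assume z: "cardinal_norm G U g = 0"
  have "\<exists>A. A \<subseteq> U \<and> finite A \<and> card A = card U \<and> g \<in> generate G A" using assms by blast
  hence "\<exists>A. A \<subseteq> U \<and> finite A \<and> card A = cardinal_norm G U g \<and> g \<in> generate G A"
    unfolding cardinal_norm_def by (rule LeastI)
  then obtain A where "finite A" "card A = 0" "g \<in> generate G A"
    using z by auto
  hence "A = {}" by simp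
  with \<open>g \<in> generate G A\<close> show "g = \<one>\<^bsub>G\<^esub>"
    using group.generate_empty[OF assms(1)] by simp
next
  assume "g = \<one>\<^bsub>G\<^esub>"
  hence "\<exists>A. A \<subseteq> U \<and> finite A \<and> card A = 0 \<and> g \<in> generate G A"
    using generate.one[of G "{}"] by (intro exI[of _ "{}"]) simp
  hence "cardinal_norm G U g \<le> 0" unfolding cardinal_norm_def
    by (rule Least_le)
  thus "cardinal_norm G U g = 0" by simp
qed

lemma metric_props:
  fixes G (structure)
  assumes "group G" "finite_gen_set G U" "g \<in> carrier G" "h \<in> carrier G"
  shows "cardinal_metric G U g h \<le> card U"
    and "cardinal_metric G U g h = 0 \<longleftrightarrow> g = h"
proof -
  interpret group G by fact
  have m: "inv g \<otimes> h \<in> generate G U" "finite U"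
    using assms unfolding finite_gen_set_def by auto
  show "cardinal_metric G U g h \<le> card U"
    unfolding cardinal_metric_def by (rule norm_le[OF m(2) m(1)])
  have "inv g \<otimes> h = \<one> \<longleftrightarrow> g = h"
  proof
    assume "inv g \<otimes> h = \<one>"
    hence "g \<otimes> (inv g \<otimes> h) = g" using assms(3) by simp
    thus "g = h" using assms(3,4) by (simp add: m_assoc[symmetric])
  next
    assume "g = h" thus "inv g \<otimes> h = \<one>" using assms(3) by simp
  qed
  thus "cardinal_metric G U g h = 0 \<longleftrightarrow> g = h"
    unfolding cardinal_metric_def using norm_zero_iff[OF assms(1) m(2) m(1)] by simp
qed

theorem mainTheorem4:
  fixes G :: "('a, 'b) monoid_scheme" and S T :: "'a set" and f :: "'a \<Rightarrow> 'a"
  assumes "group G"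
    and "finite_gen_set G S" and "finite_gen_set G T"
    and "f \<in> carrier G \<rightarrow> carrier G" and "inj_on f (carrier G)"
  shows "\<exists>K::real. K \<ge> 1 \<and> (\<forall>g\<in>carrier G. \<forall>h\<in>carrier G.
           (1 / K) * real (cardinal_metric G T g h) \<le> real (cardinal_metric G S (f g) (f h)) \<and>
           real (cardinal_metric G S (f g) (f h)) \<le> K * real (cardinal_metric G T g h))"
proof (intro exI[of _ "real (card S + card T + 1)"] conjI ballI)
  let ?K = "real (card S + card T + 1)"
  show "?K \<ge> 1" by simp
  fix g h assume g: "g \<in> carrier G" and h: "h \<in> carrier G"
  have fg: "f g \<in> carrier G" and fh: "f h \<in> carrier G" using assms(4) g h by auto
  note T = metric_props[OF assms(1) assms(3) g h]
  note S = metric_props[OF assms(1) assms(2) fg fh]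
  have inj: "f g = f h \<longleftrightarrow> g = h" using assms(5) g h by (meson inj_on_eq_iff)
  show "1 / ?K * real (cardinal_metric G T g h) \<le> real (cardinal_metric G S (f g) (f h))"
  proof (cases "g = h")
    case True thus ?thesis using T(2) S(2) by simp
  next
    case False
    hence "cardinal_metric G S (f g) (f h) \<ge> 1" using S(2) inj by (simp add: Suc_leI)
    moreover have "real (cardinal_metric G T g h) \<le> ?K" using T(1) by simp
    hence "1 / ?K * real (cardinal_metric G T g h) \<le> 1" by (simp add: field_simps)
    ultimately show ?thesis by linarith
  qed
  show "real (cardinal_metric G S (f g) (f h)) \<le> ?K * real (cardinal_metric G T g h)"
  proof (cases "g = h")
    case True thus ?thesis using T(2) S(2) by simp
  next
    case False
    hence "cardinal_metric G T g h \<ge> 1" using T(2) by (simp add: Suc_leI)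
    hence "?K \<le> ?K * real (cardinal_metric G T g h)" by simp
    moreover have "real (cardinal_metric G S (f g) (f h)) \<le> ?K" using S(1) by simp
    ultimately show ?thesis by linarith
  qed
qed

end
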